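(* Let $N$ be a perfect planar network in an annulus whose edge weights are given by flag coordinates as $w_e=x_v^ix_u^j$, and let $\{\cdot,\cdot\}_N$ be the Poisson bracket on the space of edge weights obtained as the pushforward of the universal bracket with parameters $\alpha_{ij},\beta_{ij}$. Then the gauge-invariant functions on the space of edge weights form a Poisson subalgebra, so that $\{\cdot,\cdot\}_N$ pushes forward under the projection $y:\mathcal E_N\to\mathcal F_N$ to a Poisson bracket $\{\cdot,\cdot\}_{\mathcal F_N}$ on the space $\mathcal F_N$ of face and trail weights; moreover, $\{\cdot,\cdot\}_{\mathcal F_N}$ depends on the six parameters $\alpha_{ij}$ and the six parameters $\beta_{ij}$ only through \[ \alpha=\alpha_{23}+\alpha_{13}-\alpha_{12},\qquad \beta=\beta_{23}+\beta_{13}-\beta_{12}, \] and is linear in $(\alpha,\beta)$.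
   Context: A perfect planar network in an annulus: a directed graph $G=(V,E)$ embedded in an annulus, with boundary vertices on the two boundary circles, each a source (one outgoing edge, no incoming) or a sink (one incoming edge, no outgoing); internal vertices have degree $3$ and are white (exactly one incoming edge) or black (exactly one outgoing edge); a cut and edge weights $w_e\in\mathbb R\setminus0$ as usual. A flag is a pair $(v,e)$ with $v$ an endpoint of $e$. To each internal vertex $v$ assign coordinates $x_v^1,x_v^2,x_v^3\in\mathbb R\setminus0$ labeling the three flags at $v$: $x_v^1$ labels the flag of the edge that is unique in its direction at $v$ (the incoming edge if $v$ is white, the outgoing edge if $v$ is black), and the flags labeled $x_v^1,x_v^2,x_v^3$ follow each other in clockwise order around $v$. Each boundary vertex $b_j$ gets one coordinate $x_j^1$ labeling its unique flag. Edge weights are $w_e=x_v^ix_u^j$, where $x_v^i,x_u^j$ label the two flags of $e$. The universal bracket is $\{x_v^i,x_v^j\}=\alpha_{ij}x_v^ix_v^j$ at white $v$, $\{x_v^i,x_v^j\}=\beta_{ij}x_v^ix_v^j$ at black $v$ ($i\ne j$, antisymmetric constants), all other brackets of coordinates zero; $\{\cdot,\cdot\}_N$ is its pushforward to the space $\mathcal E_N=(\mathbb R\setminus0)^{|E|}$ of edge weights. Gauge group: $\mathcal G=\mathrm{Hom}(\mathbb Z^{V_0},\mathbb R^* )$, $V_0$ the internal vertices, i.e. functions $\varphi:V\to\mathbb R^*$ with $\varphi(b)=1$ at boundary vertices, acting by $w_e\mapsto w_e\varphi(v)/\varphi(u)$ for $e=(u,v)$. $\mathcal F_N=\mathcal E_N/\mathcal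 G$ and $y:\mathcal E_N\to\mathcal F_N$ is the projection. The functions on $\mathcal F_N$ are generated by face weights $y_f=\prod_{e\in\partial f}w_e^{\pm1}$ (exponent $+1$ if the direction of $e$ agrees with the counterclockwise orientation of $\partial f$, $-1$ otherwise; $f$ a connected component of the complement of $G$ in the annulus) and, if some trail connects the two boundary circles, by the weight $y_t=\prod w(v_i,v_{i+1})$ of such a trail $t=(v_1,\dots,v_{k+1})$ (a sequence of vertices, consecutive ones joined by an edge in either direction, with boundary endpoints), where $w(v_i,v_{i+1})=w_e$ if $e=(v_i,v_{i+1})\in E$ and $w_e^{-1}$ if $e=(v_{i+1},v_i)\in E$. *)

theory Defs
  imports "HOL-Analysis.Analysis"
begin

text \<open>
A flag is a pair (e, s) with s = False
for the tail end of e and s = True for the head end (so a loop has two flags).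
bd is the set of boundary vertices, wh v says that the internal vertex v is
white (otherwise black).  rot is the clockwise rotation of flags around
internal vertices and lab gives the index i of the coordinate x_v^i of a flag.
\<close>

type_synonym 'e flag = "'e \<times> bool"

definition fvert :: "('e \<Rightarrow> 'v) \<Rightarrow> ('e \<Rightarrow> 'v) \<Rightarrow> 'e flag \<Rightarrow> 'v" where
  "fvert src tgt a = (if snd a then tgt (fst a) else src (fst a))"

definition flags_at :: "('e \<Rightarrow> 'v) \<Rightarrow> ('e \<Rightarrow> 'v) \<Rightarrow> 'v \<Rightarrow> 'e flag set" where
  "flags_at src tgt v = {a. fvert src tgt a = v}"

definition in_flags :: "('e \<Rightarrow> 'v) \<Rightarrow> ('e \<Rightarrow> 'v) \<Rightarrow> 'v \<Rightarrow> 'e flag set" where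
  "in_flags src tgt v = {a. snd a \<and> tgt (fst a) = v}"

definition out_flags :: "('e \<Rightarrow> 'v) \<Rightarrow> ('e \<Rightarrow> 'v) \<Rightarrow> 'v \<Rightarrow> 'e flag set" where
  "out_flags src tgt v = {a. \<not> snd a \<and> src (fst a) = v}"

definition perfect_network ::
  "('e::finite \<Rightarrow> 'v) \<Rightarrow> ('e \<Rightarrow> 'v) \<Rightarrow> 'v set \<Rightarrow> ('v \<Rightarrow> bool)
   \<Rightarrow> ('e flag \<Rightarrow> 'e flag) \<Rightarrow> ('e flag \<Rightarrow> nat) \<Rightarrow> bool" where
  "perfect_network src tgt bd wh rot lab \<longleftrightarrow>
     \<comment> \<open>boundary vertices: exactly one flag (source or sink)\<close>
     (\<forall>v\<in>bd. card (flags_at src tgt v) = 1) \<and>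
     \<comment> \<open>internal vertices: degree 3, white: one incoming, black: one outgoing\<close>
     (\<forall>v. v \<notin> bd \<longrightarrow> (flags_at src tgt v \<noteq> {} \<longrightarrow>
        card (flags_at src tgt v) = 3 \<and>
        (if wh v then card (in_flags src tgt v) = 1 else card (out_flags src tgt v) = 1))) \<and>
     \<comment> \<open>rotation system: rot cyclically permutes the three flags at each internal vertex\<close>
     (\<forall>a. fvert src tgt a \<notin> bd \<longrightarrow>
        fvert src tgt (rot a) = fvert src tgt a \<and> rot a \<noteq> a \<and> rot (rot (rot a)) = a) \<and>
     \<comment> \<open>labels: 1 on the flag unique in its direction, then 2, 3 clockwise\<close>
     (\<forall>a. fvert src tgt a \<notin> bd \<longrightarrow>
        lab a \<in> {1,2,3} \<and> lab (rot a) = lab a mod 3 + 1 \<and>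
        (lab a = 1 \<longleftrightarrow> (if wh (fvert src tgt a) then snd a else \<not> snd a))) \<and>
     (\<forall>a. fvert src tgt a \<in> bd \<longrightarrow> lab a = 1)"

definition edge_weights :: "real ^ ('e::finite flag) \<Rightarrow> real ^ 'e" where
  "edge_weights x = (\<chi> e. x $ (e, False) * x $ (e, True))"

definition EN :: "(real ^ ('e::finite)) set" where
  "EN = {w. \<forall>e. w $ e \<noteq> 0}"

definition XN :: "(real ^ ('e::finite flag)) set" where
  "XN = {x. \<forall>a. x $ a \<noteq> 0}"

definition pd :: "(real ^ 'i::finite \<Rightarrow> real) \<Rightarrow> 'i \<Rightarrow> real ^ 'i \<Rightarrow> real" where
  "pd f i w = deriv (\<lambda>t. f (\<chi> j. if j = i then t else w $ j)) (w $ i)"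

text \<open>structure constants of the universal bracket:
  {x_a, x_b} = univ_pi a b * x_a * x_b\<close>
definition univ_pi ::
  "('e \<Rightarrow> 'v) \<Rightarrow> ('e \<Rightarrow> 'v) \<Rightarrow> 'v set \<Rightarrow> ('v \<Rightarrow> bool) \<Rightarrow> ('e flag \<Rightarrow> nat)
   \<Rightarrow> (nat \<Rightarrow> nat \<Rightarrow> real) \<Rightarrow> (nat \<Rightarrow> nat \<Rightarrow> real) \<Rightarrow> 'e flag \<Rightarrow> 'e flag \<Rightarrow> real" where
  "univ_pi src tgt bd wh lab \<alpha> \<beta> a b =
     (if a \<noteq> b \<and> fvert src tgt a = fvert src tgt b \<and> fvert src tgt a \<notin> bd
      then (if wh (fvert src tgt a) then \<alpha> (lab a) (lab b) else \<beta> (lab a) (lab b))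
      else 0)"

definition univ_bracket ::
  "('e::finite \<Rightarrow> 'v) \<Rightarrow> ('e \<Rightarrow> 'v) \<Rightarrow> 'v set \<Rightarrow> ('v \<Rightarrow> bool) \<Rightarrow> ('e flag \<Rightarrow> nat)
   \<Rightarrow> (nat \<Rightarrow> nat \<Rightarrow> real) \<Rightarrow> (nat \<Rightarrow> nat \<Rightarrow> real)
   \<Rightarrow> (real ^ 'e flag \<Rightarrow> real) \<Rightarrow> (real ^ 'e flag \<Rightarrow> real) \<Rightarrow> real ^ 'e flag \<Rightarrow> real" where
  "univ_bracket src tgt bd wh lab \<alpha> \<beta> F G x =
     (\<Sum>a\<in>UNIV. \<Sum>b\<in>UNIV. univ_pi src tgt bd wh lab \<alpha> \<beta> a b * x $ a * x $ b * pd F a x * pd G b x)"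

definition net_omega ::
  "('e \<Rightarrow> 'v) \<Rightarrow> ('e \<Rightarrow> 'v) \<Rightarrow> 'v set \<Rightarrow> ('v \<Rightarrow> bool) \<Rightarrow> ('e flag \<Rightarrow> nat)
   \<Rightarrow> (nat \<Rightarrow> nat \<Rightarrow> real) \<Rightarrow> (nat \<Rightarrow> nat \<Rightarrow> real) \<Rightarrow> 'e \<Rightarrow> 'e \<Rightarrow> real" where
  "net_omega src tgt bd wh lab \<alpha> \<beta> e f =
     (\<Sum>s\<in>UNIV. \<Sum>t\<in>UNIV. univ_pi src tgt bd wh lab \<alpha> \<beta> (e, s) (f, t))"

definition net_bracket ::
  "('e::finite \<Rightarrow> 'v) \<Rightarrow> ('e \<Rightarrow> 'v) \<Rightarrow> 'v set \<Rightarrow> ('v \<Rightarrow> bool) \<Rightarrow> ('e flag \<Rightarrow> nat)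
   \<Rightarrow> (nat \<Rightarrow> nat \<Rightarrow> real) \<Rightarrow> (nat \<Rightarrow> nat \<Rightarrow> real)
   \<Rightarrow> (real ^ 'e \<Rightarrow> real) \<Rightarrow> (real ^ 'e \<Rightarrow> real) \<Rightarrow> real ^ 'e \<Rightarrow> real" where
  "net_bracket src tgt bd wh lab \<alpha> \<beta> f g w =
     (\<Sum>e\<in>UNIV. \<Sum>e'\<in>UNIV. net_omega src tgt bd wh lab \<alpha> \<beta> e e' * w $ e * w $ e' * pd f e w * pd g e' w)"

definition gauge_group :: "'v set \<Rightarrow> ('v \<Rightarrow> real) set" where
  "gauge_group bd = {\<phi>. (\<forall>v. \<phi> v \<noteq> 0) \<and> (\<forall>v\<in>bd. \<phi> v = 1)}"

definition gauge_act :: "('e::finite \<Rightarrow> 'v) \<Rightarrow> ('e \<Rightarrow> 'v) \<Rightarrow> ('v \<Rightarrow> real) \<Rightarrow> real ^ 'e \<Rightarrow> real ^ 'e" where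
  "gauge_act src tgt \<phi> w = (\<chi> e. w $ e * \<phi> (tgt e) / \<phi> (src e))"

definition gauge_invariant ::
  "('e::finite \<Rightarrow> 'v) \<Rightarrow> ('e \<Rightarrow> 'v) \<Rightarrow> 'v set \<Rightarrow> (real ^ 'e \<Rightarrow> real) \<Rightarrow> bool" where
  "gauge_invariant src tgt bd f \<longleftrightarrow>
     (\<forall>\<phi>\<in>gauge_group bd. \<forall>w\<in>EN. f (gauge_act src tgt \<phi> w) = f w)"

definition antisym3 :: "(nat \<Rightarrow> nat \<Rightarrow> real) \<Rightarrow> bool" where
  "antisym3 c \<longleftrightarrow> (\<forall>i\<in>{1,2,3}. \<forall>j\<in>{1,2,3}. c i j = - c j i)"

definition smooth_on_EN :: "(real ^ ('e::finite) \<Rightarrow> real) \<Rightarrow> bool" where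
  "smooth_on_EN f \<longleftrightarrow> (\<forall>w\<in>EN. f differentiable (at w))"

end

theory Submission imports Defs begin

lemma lin_expand:
  fixes f' :: "real^'i::finite \<Rightarrow> real"
  assumes "bounded_linear f'"
  shows "f' u = (\<Sum>e\<in>UNIV. u$e * f' (axis e 1))"
proof -
  have "f' u = f' (\<Sum>e\<in>UNIV. (u$e) *\<^sub>R axis e 1)"
    using basis_expansion[of u] by (simp add: scalar_mult_eq_scaleR)
  also have "\<dots> = (\<Sum>e\<in>UNIV. u$e * f' (axis e 1))"
    using assms by (simp add: linear_sum bounded_linear.linear linear_cmul)
  finally show ?thesis .
qed

lemma pd_line:
  fixes f :: "real^'i::finite \<Rightarrow> real"
  assumes "(f has_derivative f') (at w)"
  shows "((\<lambda>t. f (\<chi> j. if j = i then t else w$j)) has_field_derivative f' (axis i 1)) (at (w$i))"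
proof -
  have eq: "\<And>t. (\<chi> j. if j = i then t else w$j) = w + (t - w$i) *\<^sub>R axis i 1"
    by (auto simp: vec_eq_iff axis_def)
  have d: "((\<lambda>t. w + (t - w$i) *\<^sub>R axis i 1) has_derivative (\<lambda>h. h *\<^sub>R axis i 1)) (at (w$i))"
    by (auto intro!: derivative_eq_intros)
  have "((\<lambda>t. f (w + (t - w$i) *\<^sub>R axis i 1)) has_derivative (\<lambda>h. f' (h *\<^sub>R axis i 1))) (at (w$i))"
    using has_derivative_compose[OF d, of f f'] assms by simp
  moreover have "(\<lambda>h. f' (h *\<^sub>R axis i 1)) = (*) (f' (axis i 1))"
    using has_derivative_bounded_linear[OF assms]
    by (auto simp: fun_eq_iff linear_cmul bounded_linear.linear)
  ultimately show ?thesis unfolding has_field_derivative_def eq by simp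
qed

lemma pd_eq:
  fixes f :: "real^'i::finite \<Rightarrow> real"
  assumes "(f has_derivative f') (at w)"
  shows "pd f i w = f' (axis i 1)"
  unfolding pd_def by (rule DERIV_imp_deriv[OF pd_line[OF assms]])


lemma pd_scaled:
  fixes f :: "real^'i::finite \<Rightarrow> real"
  assumes "(f has_derivative f') (at w)" "c * s = w$i"
  shows "((\<lambda>t. f (\<chi> j. if j = i then c * t else w$j)) has_field_derivative f' (axis i 1) * c) (at s)"
proof -
  have "((\<lambda>t. c * t) has_field_derivative c) (at s)"
    by (auto intro!: derivative_eq_intros)
  from DERIV_chain2[OF pd_line[OF assms(1), of i, folded assms(2)] this]
  show ?thesis by simp
qed

lemma EN_ew: "x \<in> XN \<Longrightarrow> edge_weights x \<in> EN"
  by (auto simp: XN_def EN_def edge_weights_def)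

lemma pd_comp_ew:
  assumes "x \<in> XN" "f differentiable at (edge_weights x)"
  shows "pd (f \<circ> edge_weights) a x = x$(fst a, \<not> snd a) * pd f (fst a) (edge_weights x)"
proof -
  obtain f' where f': "(f has_derivative f') (at (edge_weights x))"
    using assms(2) by (auto simp: differentiable_def)
  define w where "w = edge_weights x"
  define c where "c = x$(fst a, \<not> snd a)"
  have cw: "c * x$a = w$(fst a)"
    by (cases a; cases "snd a") (auto simp: c_def w_def edge_weights_def)
  have eq: "(f \<circ> edge_weights) (\<chi> j. if j = a then t else x$j) = f (\<chi> j. if j = fst a then c * t else w$j)" for t
    by (cases a; cases "snd a") (auto simp: c_def w_def edge_weights_def vec_eq_iff intro!: arg_cong[where f=f])
  have "pd (f \<circ> edge_weights) a x = f' (axis (fst a) 1) * c"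
    unfolding pd_def eq
    by (rule DERIV_imp_deriv, rule pd_scaled) (use f' cw in \<open>auto simp: w_def\<close>)
  also have "\<dots> = c * pd f (fst a) w"
    using pd_eq[OF f'] by (simp add: w_def)
  finally show ?thesis by (simp add: c_def w_def)
qed

lemma ga_in_EN: "\<phi> \<in> gauge_group bd \<Longrightarrow> w \<in> EN \<Longrightarrow> gauge_act src tgt \<phi> w \<in> EN"
  by (auto simp: gauge_group_def EN_def gauge_act_def)

lemma D_gauge:
  assumes gi: "gauge_invariant src tgt bd f" and sm: "smooth_on_EN f"
    and phi: "\<phi> \<in> gauge_group bd" and w: "w \<in> EN"
  shows "(gauge_act src tgt \<phi> w)$e * pd f e (gauge_act src tgt \<phi> w) = w$e * pd f e w"
proof -
  define u where "u = gauge_act src tgt \<phi> w"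
  define r where "r = \<phi> (tgt e) / \<phi> (src e)"
  have u: "u \<in> EN" using ga_in_EN[OF phi w] by (simp add: u_def)
  obtain f' where f': "(f has_derivative f') (at u)"
    using sm u by (auto simp: smooth_on_EN_def differentiable_def)
  have ue: "u$e = w$e * r" by (simp add: u_def r_def gauge_act_def)
  have D1: "((\<lambda>t. f (\<chi> j. if j = e then r * t else u$j)) has_field_derivative f' (axis e 1) * r) (at (w$e))"
    by (rule pd_scaled[OF f']) (simp add: ue)
  have E1: "f (\<chi> j. if j = e then r * t else u$j) = f (\<chi> j. if j = e then t else w$j)"
    if "t \<in> {t. t \<noteq> 0}" for t
  proof -
    have l: "(\<chi> j. if j = e then t else w$j) \<in> EN" using that w by (auto simp: EN_def)
    have "gauge_act src tgt \<phi> (\<chi> j. if j = e then t else w$j) = (\<chi> j. if j = e then r * t else u$j)"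
      by (auto simp: gauge_act_def vec_eq_iff u_def r_def)
    with gi phi l show ?thesis unfolding gauge_invariant_def by metis
  qed
  have "((\<lambda>t. f (\<chi> j. if j = e then t else w$j)) has_field_derivative f' (axis e 1) * r) (at (w$e))"
    by (rule has_field_derivative_transform_within_open[OF D1 _ _ E1, of "{t. t \<noteq> 0}"]) (use w in \<open>auto simp: EN_def open_Collect_neq\<close>)
  hence "pd f e w = f' (axis e 1) * r" unfolding pd_def by (rule DERIV_imp_deriv)
  moreover have "pd f e u = f' (axis e 1)" by (rule pd_eq[OF f'])
  ultimately show ?thesis by (simp add: u_def[symmetric] ue)
qed


lemma gauge_cons:
  assumes gi: "gauge_invariant src tgt bd f" and sm: "smooth_on_EN f"
    and w: "w \<in> EN" and v: "v \<notin> bd"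
  shows "(\<Sum>e\<in>UNIV. w$e * pd f e w * ((if tgt e = v then 1 else 0) - (if src e = v then 1 else 0))) = 0"
proof -
  define cf where "cf e = (if tgt e = v then 1 else 0) - (if src e = v then (1::real) else 0)" for e
  define \<gamma> where "\<gamma> t = (\<Sum>e\<in>UNIV. (w$e * exp (t * cf e)) *\<^sub>R axis e (1::real))" for t
  define d where "d = (\<Sum>e\<in>UNIV. (w$e * cf e) *\<^sub>R axis e (1::real))"
  have \<gamma>v: "\<gamma> t = (\<chi> e. w$e * exp (t * cf e))" for t
    unfolding \<gamma>_def using basis_expansion[of "\<chi> e. w$e * exp (t * cf e)"]
    by (simp add: scalar_mult_eq_scaleR)
  have \<gamma>0: "\<gamma> 0 = w" by (simp add: \<gamma>v vec_eq_iff)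
  have dg: "(\<gamma> has_derivative (\<lambda>h. h *\<^sub>R d)) (at 0)"
    unfolding \<gamma>_def d_def
    by (auto intro!: derivative_eq_intros simp: scaleR_sum_right mult_ac)
  obtain f' where f': "(f has_derivative f') (at w)"
    using sm w by (auto simp: smooth_on_EN_def differentiable_def)
  have c1: "((\<lambda>t. f (\<gamma> t)) has_derivative (\<lambda>h. f' (h *\<^sub>R d))) (at 0)"
    using has_derivative_compose[OF dg, of f f'] f' \<gamma>0 by simp
  have const: "f (\<gamma> t) = f w" for t
  proof -
    define \<phi> where "\<phi> u = (if u = v then exp t else 1)" for u
    have "\<phi> \<in> gauge_group bd" using v by (auto simp: gauge_group_def \<phi>_def)
    moreover have "gauge_act src tgt \<phi> w = \<gamma> t"
      by (auto simp: \<gamma>v gauge_act_def vec_eq_iff \<phi>_def cf_def exp_minus field_simps)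
    ultimately show ?thesis using gi w unfolding gauge_invariant_def by metis
  qed
  have c2: "((\<lambda>t. f (\<gamma> t)) has_derivative (\<lambda>h. 0)) (at 0)"
    unfolding const by (rule has_derivative_const)
  have "(\<lambda>h. f' (h *\<^sub>R d)) = (\<lambda>h. 0)" by (rule has_derivative_unique[OF c1 c2])
  hence "f' (1 *\<^sub>R d) = 0" by meson
  hence "f' d = 0" by simp
  moreover have "f' d = (\<Sum>e\<in>UNIV. d$e * f' (axis e 1))"
    by (rule lin_expand[OF has_derivative_bounded_linear[OF f']])
  moreover have "d$e = w$e * cf e" for e
    using basis_expansion[of "\<chi> e. w$e * cf e"] by (simp add: d_def scalar_mult_eq_scaleR)
  ultimately show ?thesis using pd_eq[OF f'] by (simp add: cf_def mult_ac)
qed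


definition Xv :: "('e flag \<Rightarrow> 'e flag) \<Rightarrow> ('e flag \<Rightarrow> nat) \<Rightarrow> ('e flag \<Rightarrow> real) \<Rightarrow> ('e flag \<Rightarrow> real) \<Rightarrow> 'e flag \<Rightarrow> real" where
  "Xv rot lab F G a = (let b = rot a; c = rot b in
     if lab a = 1 then F b * G c - F c * G b
     else if lab a = 2 then F a * G b - F b * G a else F c * G a - F a * G c)"

lemma vertex:
  fixes src tgt :: "'e::finite \<Rightarrow> 'v"
  assumes N: "perfect_network src tgt bd wh rot lab"
   and a\<alpha>: "antisym3 \<alpha>" and a\<beta>: "antisym3 \<beta>"
   and gF: "\<And>v. v \<notin> bd \<Longrightarrow> (\<Sum>b\<in>UNIV. if fvert src tgt b = v then (if snd b then 1 else -1) * F b else 0) = 0"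
   and gG: "\<And>v. v \<notin> bd \<Longrightarrow> (\<Sum>b\<in>UNIV. if fvert src tgt b = v then (if snd b then 1 else -1) * G b else 0) = 0"
   and a: "fvert src tgt a \<notin> bd"
  shows "(\<Sum>b\<in>UNIV. univ_pi src tgt bd wh lab \<alpha> \<beta> a b * F a * G b)
       + (\<Sum>b\<in>UNIV. univ_pi src tgt bd wh lab \<alpha> \<beta> (rot a) b * F (rot a) * G b)
       + (\<Sum>b\<in>UNIV. univ_pi src tgt bd wh lab \<alpha> \<beta> (rot (rot a)) b * F (rot (rot a)) * G b)
     = (if wh (fvert src tgt a) then (\<alpha> 2 3 + \<alpha> 1 3 - \<alpha> 1 2) else (\<beta> 2 3 + \<beta> 1 3 - \<beta> 1 2))
        * Xv rot lab F G a"
proof -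
  define v where "v = fvert src tgt a"
  define b1 where "b1 = rot a"
  define b2 where "b2 = rot b1"
  note Nd = N[unfolded perfect_network_def]
  have R: "\<And>x. fvert src tgt x \<notin> bd \<Longrightarrow> fvert src tgt (rot x) = fvert src tgt x \<and> rot x \<noteq> x \<and> rot (rot (rot x)) = x"
    using Nd by blast
  have L: "\<And>x. fvert src tgt x \<notin> bd \<Longrightarrow> lab x \<in> {1,2,3} \<and> lab (rot x) = lab x mod 3 + 1 \<and>
        (lab x = 1 \<longleftrightarrow> (if wh (fvert src tgt x) then snd x else \<not> snd x))"
    using Nd by blast
  have C: "card (flags_at src tgt v) = 3"
    using Nd a unfolding v_def flags_at_def by blast
  have v1: "fvert src tgt b1 = v" using R[OF a] by (simp add: b1_def v_def)
  have v2: "fvert src tgt b2 = v" using R[of b1] v1 a by (simp add: b2_def v_def)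
  have rb2: "rot b2 = a" using R[OF a] by (simp add: b1_def b2_def)
  have va: "fvert src tgt a = v" by (simp add: v_def)
  have vbd: "v \<notin> bd" using a by (simp add: v_def)
  have La: "lab a \<in> {1,2,3}" and Lb1: "lab b1 = lab a mod 3 + 1" and Lb2: "lab b2 = lab b1 mod 3 + 1"
    using L[OF a] L[of b1] v1 vbd by (auto simp: b1_def b2_def)
  have S: "\<And>x. x \<in> {a,b1,b2} \<Longrightarrow> (lab x = 1 \<longleftrightarrow> (if wh v then snd x else \<not> snd x))"
    using L[OF a] L[of b1] L[of b2] v1 v2 va vbd by auto
  have dist: "a \<noteq> b1" "a \<noteq> b2" "b1 \<noteq> b2"
    using La Lb1 Lb2 by auto
  have sub: "{a,b1,b2} \<subseteq> flags_at src tgt v" using va v1 v2 by (auto simp: flags_at_def)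
  have fl: "flags_at src tgt v = {a,b1,b2}"
  proof -
    have "card {a,b1,b2} = 3" using dist by simp
    thus ?thesis using card_subset_eq[OF finite sub] C by simp
  qed
  have inv: "\<And>b. fvert src tgt b = v \<longleftrightarrow> b \<in> {a,b1,b2}"
    using fl by (auto simp: flags_at_def)
  have red: "(\<Sum>b\<in>UNIV. h b) = (\<Sum>b\<in>{a,b1,b2}. h b)" if "\<And>b. b \<notin> {a,b1,b2} \<Longrightarrow> h b = 0" for h :: "'e flag \<Rightarrow> real"
    by (rule sum.mono_neutral_right) (use that in auto)
  have pi0: "univ_pi src tgt bd wh lab \<alpha> \<beta> x b = 0" if "x \<in> {a,b1,b2}" "b \<notin> {a,b1,b2}" for x b
  proof -
    have "fvert src tgt x = v" "fvert src tgt b \<noteq> v" using that inv by blast+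
    thus ?thesis by (simp add: univ_pi_def)
  qed
  have piv: "univ_pi src tgt bd wh lab \<alpha> \<beta> x y = (if x \<noteq> y then (if wh v then \<alpha> (lab x) (lab y) else \<beta> (lab x) (lab y)) else 0)"
    if "x \<in> {a,b1,b2}" "y \<in> {a,b1,b2}" for x y
  proof -
    have "fvert src tgt x = v" "fvert src tgt y = v" using that inv by blast+
    thus ?thesis using vbd by (simp add: univ_pi_def)
  qed
  have sumx: "(\<Sum>b\<in>UNIV. univ_pi src tgt bd wh lab \<alpha> \<beta> x b * F x * G b)
      = univ_pi src tgt bd wh lab \<alpha> \<beta> x a * F x * G a + univ_pi src tgt bd wh lab \<alpha> \<beta> x b1 * F x * G b1
        + univ_pi src tgt bd wh lab \<alpha> \<beta> x b2 * F x * G b2" if "x \<in> {a,b1,b2}" for x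
    by (subst red) (simp_all add: pi0[OF that] dist)
  have gF': "(if snd a then 1 else -1) * F a + (if snd b1 then 1 else -1) * F b1 + (if snd b2 then 1 else -1) * F b2 = 0"
  proof -
    have "(\<Sum>b\<in>UNIV. if fvert src tgt b = v then (if snd b then 1 else -1) * F b else 0)
      = (\<Sum>b\<in>{a,b1,b2}. if fvert src tgt b = v then (if snd b then 1 else -1) * F b else 0)"
    proof (rule red)
      fix b assume "b \<notin> {a,b1,b2}"
      hence "fvert src tgt b \<noteq> v" using inv by blast
      thus "(if fvert src tgt b = v then (if snd b then 1 else -1) * F b else 0) = 0" by simp
    qed
    thus ?thesis using gF[OF vbd] dist va v1 v2 by simp
  qed
  have gG': "(if snd a then 1 else -1) * G a + (if snd b1 then 1 else -1) * G b1 + (if snd b2 then 1 else -1) * G b2 = 0"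
  proof -
    have "(\<Sum>b\<in>UNIV. if fvert src tgt b = v then (if snd b then 1 else -1) * G b else 0)
      = (\<Sum>b\<in>{a,b1,b2}. if fvert src tgt b = v then (if snd b then 1 else -1) * G b else 0)"
    proof (rule red)
      fix b assume "b \<notin> {a,b1,b2}"
      hence "fvert src tgt b \<noteq> v" using inv by blast
      thus "(if fvert src tgt b = v then (if snd b then 1 else -1) * G b else 0) = 0" by simp
    qed
    thus ?thesis using gG[OF vbd] dist va v1 v2 by simp
  qed
  have asy: "c 2 1 = - c 1 2" "c 3 1 = - c 1 3" "c 3 2 = - c 2 3" if "antisym3 c" for c
  proof -
    have h: "\<forall>i\<in>{1,2,3}. \<forall>j\<in>{1,2,3}. c i j = - c j i" using that unfolding antisym3_def .
    show "c 2 1 = - c 1 2" using h by blast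
    show "c 3 1 = - c 1 3" using h by blast
    show "c 3 2 = - c 2 3" using h by blast
  qed
  note A = asy[OF a\<alpha>] asy[OF a\<beta>]
  have X: "Xv rot lab F G a = (if lab a = 1 then F b1 * G b2 - F b2 * G b1
     else if lab a = 2 then F a * G b1 - F b1 * G a else F b2 * G a - F a * G b2)"
    by (simp add: Xv_def b1_def b2_def Let_def)
  have alg: "F1*(c 1 2*G2 + c 1 3*G3) + F2*(c 2 1*G1 + c 2 3*G3) + F3*(c 3 1 * G1 + c 3 2 * G2)
      = (c 2 3 + c 1 3 - c 1 2)*(F2*G3 - F3*G2)"
    if "c 2 1 = - c 1 2" "c 3 1 = - c 1 3" "c 3 2 = - c 2 3" "F1 = F2 + F3" "G1 = G2 + G3"
    for c :: "nat \<Rightarrow> nat \<Rightarrow> real" and F1 F2 F3 G1 G2 G3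
    using that by (simp add: algebra_simps)
  define c where "c = (if wh v then \<alpha> else \<beta>)"
  have ac: "c 2 1 = - c 1 2" "c 3 1 = - c 1 3" "c 3 2 = - c 2 3"
    using A by (auto simp: c_def)
  have piv': "univ_pi src tgt bd wh lab \<alpha> \<beta> x y = (if x \<noteq> y then c (lab x) (lab y) else 0)"
    if "x \<in> {a,b1,b2}" "y \<in> {a,b1,b2}" for x y
    using piv[OF that] by (simp add: c_def)
  have LHS: "(\<Sum>b\<in>UNIV. univ_pi src tgt bd wh lab \<alpha> \<beta> a b * F a * G b)
       + (\<Sum>b\<in>UNIV. univ_pi src tgt bd wh lab \<alpha> \<beta> b1 b * F b1 * G b)
       + (\<Sum>b\<in>UNIV. univ_pi src tgt bd wh lab \<alpha> \<beta> b2 b * F b2 * G b)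
     = (c (lab a) (lab b1) * F a * G b1 + c (lab a) (lab b2) * F a * G b2)
       + (c (lab b1) (lab a) * F b1 * G a + c (lab b1) (lab b2) * F b1 * G b2)
       + (c (lab b2) (lab a) * F b2 * G a + c (lab b2) (lab b1) * F b2 * G b1)"
    unfolding sumx[of a, simplified] sumx[of b1, simplified] sumx[of b2, simplified]
    by (simp add: piv' dist dist[symmetric])
  have k: "(if wh v then (\<alpha> 2 3 + \<alpha> 1 3 - \<alpha> 1 2) else (\<beta> 2 3 + \<beta> 1 3 - \<beta> 1 2)) = c 2 3 + c 1 3 - c 1 2"
    by (simp add: c_def)
  have Sa: "lab a = 1 \<longleftrightarrow> (if wh v then snd a else \<not> snd a)"
   and Sb1: "lab b1 = 1 \<longleftrightarrow> (if wh v then snd b1 else \<not> snd b1)"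
   and Sb2: "lab b2 = 1 \<longleftrightarrow> (if wh v then snd b2 else \<not> snd b2)" using S by auto
  have "lab a = 1 \<or> lab a = 2 \<or> lab a = 3" using La by auto
  hence "(\<Sum>b\<in>UNIV. univ_pi src tgt bd wh lab \<alpha> \<beta> a b * F a * G b)
       + (\<Sum>b\<in>UNIV. univ_pi src tgt bd wh lab \<alpha> \<beta> b1 b * F b1 * G b)
       + (\<Sum>b\<in>UNIV. univ_pi src tgt bd wh lab \<alpha> \<beta> b2 b * F b2 * G b)
     = (c 2 3 + c 1 3 - c 1 2) * (if lab a = 1 then F b1 * G b2 - F b2 * G b1
     else if lab a = 2 then F a * G b1 - F b1 * G a else F b2 * G a - F a * G b2)"
  proof (elim disjE)
    assume l: "lab a = 1"
    hence l1: "lab b1 = 2" "lab b2 = 3" using Lb1 Lb2 by auto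
    have "F a = F b1 + F b2 \<and> G a = G b1 + G b2"
      using gF' gG' Sa Sb1 Sb2 l l1 by (cases "wh v") auto
    thus ?thesis unfolding LHS using l l1 ac by (simp add: algebra_simps)
  next
    assume l: "lab a = 2"
    hence l1: "lab b1 = 3" "lab b2 = 1" using Lb1 Lb2 by auto
    have "F b2 = F a + F b1 \<and> G b2 = G a + G b1"
      using gF' gG' Sa Sb1 Sb2 l l1 by (cases "wh v") auto
    thus ?thesis unfolding LHS using l l1 ac by (simp add: algebra_simps)
  next
    assume l: "lab a = 3"
    hence l1: "lab b1 = 1" "lab b2 = 2" using Lb1 Lb2 by auto
    have "F b1 = F b2 + F a \<and> G b1 = G b2 + G a"
      using gF' gG' Sa Sb1 Sb2 l l1 by (cases "wh v") auto
    thus ?thesis unfolding LHS using l l1 ac by (simp add: algebra_simps)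
  qed
  thus ?thesis unfolding b1_def[symmetric] b2_def[symmetric] va X k .
qed


lemma sum_pairs: "sum h (UNIV :: ('a::finite \<times> 'b::finite) set) = (\<Sum>e\<in>UNIV. \<Sum>s\<in>UNIV. h (e,s))"
  by (simp only: sum.cartesian_product UNIV_Times_UNIV case_prod_eta)

lemma sum_flags:
  fixes p :: "'e::finite flag \<Rightarrow> 'e flag \<Rightarrow> real"
  shows "(\<Sum>a\<in>UNIV. \<Sum>b\<in>UNIV. p a b * X (fst a) * Y (fst b))
    = (\<Sum>e\<in>UNIV. \<Sum>e'\<in>UNIV. (\<Sum>s\<in>UNIV. \<Sum>t\<in>UNIV. p (e,s) (e',t)) * X e * Y e')"
proof -
  have "(\<Sum>a\<in>UNIV. \<Sum>b\<in>UNIV. p a b * X (fst a) * Y (fst b))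
      = (\<Sum>e\<in>UNIV. \<Sum>s\<in>UNIV. \<Sum>e'\<in>UNIV. \<Sum>t\<in>UNIV. p (e,s) (e',t) * X e * Y e')"
    by (simp add: sum_pairs)
  also have "\<dots> = (\<Sum>e\<in>UNIV. \<Sum>e'\<in>UNIV. \<Sum>s\<in>UNIV. \<Sum>t\<in>UNIV. p (e,s) (e',t) * X e * Y e')"
    by (rule sum.cong[OF refl], rule sum.swap)
  also have "\<dots> = (\<Sum>e\<in>UNIV. \<Sum>e'\<in>UNIV. (\<Sum>s\<in>UNIV. \<Sum>t\<in>UNIV. p (e,s) (e',t)) * X e * Y e')"
    by (simp add: sum_distrib_right)
  finally show ?thesis .
qed

definition Fof :: "(real ^ 'e \<Rightarrow> real) \<Rightarrow> real ^ 'e \<Rightarrow> 'e flag \<Rightarrow> real" where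
  "Fof f w a = w$(fst a) * pd f (fst a) w"

lemma net_bracket_flags:
  "net_bracket src tgt bd wh lab \<alpha> \<beta> f g w
    = (\<Sum>a\<in>UNIV. \<Sum>b\<in>UNIV. univ_pi src tgt bd wh lab \<alpha> \<beta> a b * Fof f w a * Fof g w b)"
proof -
  have "net_bracket src tgt bd wh lab \<alpha> \<beta> f g w = (\<Sum>e\<in>UNIV. \<Sum>e'\<in>UNIV.
     (\<Sum>s\<in>UNIV. \<Sum>t\<in>UNIV. univ_pi src tgt bd wh lab \<alpha> \<beta> (e,s) (e',t))
       * (w$e * pd f e w) * (w$e' * pd g e' w))"
    unfolding net_bracket_def net_omega_def by (simp add: mult_ac)
  also have "\<dots> = (\<Sum>a\<in>UNIV. \<Sum>b\<in>UNIV. univ_pi src tgt bd wh lab \<alpha> \<beta> a b * Fof f w a * Fof g w b)"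
    unfolding Fof_def by (rule sum_flags[symmetric])
  finally show ?thesis .
qed

lemma gauge_flags:
  fixes src tgt :: "'e::finite \<Rightarrow> 'v"
  assumes gi: "gauge_invariant src tgt bd f" and sm: "smooth_on_EN f"
    and w: "w \<in> EN" and v: "v \<notin> bd"
  shows "(\<Sum>b\<in>UNIV. if fvert src tgt b = v then (if snd b then 1 else -1) * Fof f w b else 0) = 0"
proof -
  have "(\<Sum>b\<in>UNIV. if fvert src tgt b = v then (if snd b then 1 else -1) * Fof f w b else 0)
     = (\<Sum>e\<in>UNIV. w$e * pd f e w * ((if tgt e = v then 1 else 0) - (if src e = v then 1 else 0)))"
    unfolding sum_pairs by (rule sum.cong[OF refl]) (simp add: UNIV_bool fvert_def Fof_def algebra_simps)
  also have "\<dots> = 0" by (rule gauge_cons[OF gi sm w v])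
  finally show ?thesis .
qed


lemma xpd:
  assumes "x \<in> XN" "f differentiable at (edge_weights x)"
  shows "x$a * pd (f \<circ> edge_weights) a x = Fof f (edge_weights x) a"
  unfolding pd_comp_ew[OF assms] Fof_def
  by (cases a; cases "snd a") (auto simp: edge_weights_def)

lemma part0:
  assumes sf: "smooth_on_EN f" and sg: "smooth_on_EN g" and x: "x \<in> XN"
  shows "univ_bracket src tgt bd wh lab \<alpha> \<beta> (f \<circ> edge_weights) (g \<circ> edge_weights) x
                 = net_bracket src tgt bd wh lab \<alpha> \<beta> f g (edge_weights x)"
proof -
  have df: "f differentiable at (edge_weights x)" and dg: "g differentiable at (edge_weights x)"
    using sf sg EN_ew[OF x] by (auto simp: smooth_on_EN_def)
  have "univ_bracket src tgt bd wh lab \<alpha> \<beta> (f \<circ> edge_weights) (g \<circ> edge_weights) x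
     = (\<Sum>a\<in>UNIV. \<Sum>b\<in>UNIV. univ_pi src tgt bd wh lab \<alpha> \<beta> a b
          * (x$a * pd (f \<circ> edge_weights) a x) * (x$b * pd (g \<circ> edge_weights) b x))"
    unfolding univ_bracket_def by (simp add: mult_ac)
  also have "\<dots> = (\<Sum>a\<in>UNIV. \<Sum>b\<in>UNIV. univ_pi src tgt bd wh lab \<alpha> \<beta> a b
          * Fof f (edge_weights x) a * Fof g (edge_weights x) b)"
    by (simp only: xpd[OF x df] xpd[OF x dg])
  also have "\<dots> = net_bracket src tgt bd wh lab \<alpha> \<beta> f g (edge_weights x)"
    by (rule net_bracket_flags[symmetric])
  finally show ?thesis .
qed

lemma part1:
  fixes src tgt :: "'e::finite \<Rightarrow> 'v" and f g :: "real ^ 'e \<Rightarrow> real"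
  assumes sf: "smooth_on_EN f" and sg: "smooth_on_EN g"
    and gf: "gauge_invariant src tgt bd f" and gg: "gauge_invariant src tgt bd g"
  shows "gauge_invariant src tgt bd (net_bracket src tgt bd wh lab \<alpha> \<beta> f g)"
  unfolding gauge_invariant_def
proof (intro ballI)
  fix \<phi> and w :: "real ^ 'e" assume phi: "\<phi> \<in> gauge_group bd" and w: "w \<in> EN"
  have "Fof f (gauge_act src tgt \<phi> w) = Fof f w" "Fof g (gauge_act src tgt \<phi> w) = Fof g w"
    using D_gauge[OF gf sf phi w] D_gauge[OF gg sg phi w] by (auto simp: Fof_def fun_eq_iff)
  thus "net_bracket src tgt bd wh lab \<alpha> \<beta> f g (gauge_act src tgt \<phi> w) = net_bracket src tgt bd wh lab \<alpha> \<beta> f g w"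
    by (simp add: net_bracket_flags)
qed

lemma part2:
  fixes src tgt :: "'e::finite \<Rightarrow> 'v"
  assumes N: "perfect_network src tgt bd wh rot lab"
   and a\<alpha>: "antisym3 \<alpha>" and a\<beta>: "antisym3 \<beta>"
   and sf: "smooth_on_EN f" and sg: "smooth_on_EN g"
   and gf: "gauge_invariant src tgt bd f" and gg: "gauge_invariant src tgt bd g"
   and w: "w \<in> EN"
  shows "net_bracket src tgt bd wh lab \<alpha> \<beta> f g w =
     (\<alpha> 2 3 + \<alpha> 1 3 - \<alpha> 1 2) * ((1/3) * (\<Sum>a\<in>UNIV. if fvert src tgt a \<notin> bd \<and> wh (fvert src tgt a) then Xv rot lab (Fof f w) (Fof g w) a else 0))
   + (\<beta> 2 3 + \<beta> 1 3 - \<beta> 1 2) * ((1/3) * (\<Sum>a\<in>UNIV. if fvert src tgt a \<notin> bd \<and> \<not> wh (fvert src tgt a) then Xv rot lab (Fof f w) (Fof g w) a else 0))"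
proof -
  define F where "F = Fof f w"
  define G where "G = Fof g w"
  define T where "T a = (\<Sum>b\<in>UNIV. univ_pi src tgt bd wh lab \<alpha> \<beta> a b * F a * G b)" for a
  define I where "I = {a. fvert src tgt a \<notin> bd}"
  define k where "k a = (if wh (fvert src tgt a) then (\<alpha> 2 3 + \<alpha> 1 3 - \<alpha> 1 2) else (\<beta> 2 3 + \<beta> 1 3 - \<beta> 1 2))" for a
  have R: "\<And>x. fvert src tgt x \<notin> bd \<Longrightarrow> fvert src tgt (rot x) = fvert src tgt x \<and> rot x \<noteq> x \<and> rot (rot (rot x)) = x"
    using N unfolding perfect_network_def by blast
  have s1: "net_bracket src tgt bd wh lab \<alpha> \<beta> f g w = (\<Sum>a\<in>UNIV. T a)"
    unfolding net_bracket_flags T_def F_def G_def by (simp add: sum_distrib_left)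
  have s2: "(\<Sum>a\<in>UNIV. T a) = (\<Sum>a\<in>I. T a)"
  proof (rule sum.mono_neutral_right)
    show "\<forall>a\<in>UNIV - I. T a = 0" by (auto simp: T_def I_def univ_pi_def)
  qed auto
  have bij: "bij_betw rot I I"
  proof (rule bij_betw_imageI)
    show "inj_on rot I"
    proof (rule inj_onI)
      fix x y assume "x \<in> I" "y \<in> I" "rot x = rot y"
      thus "x = y" using R[of x] R[of y] by (metis I_def mem_Collect_eq)
    qed
    show "rot ` I = I"
    proof
      show "rot ` I \<subseteq> I" using R by (auto simp: I_def)
      show "I \<subseteq> rot ` I"
      proof
        fix x assume x: "x \<in> I"
        hence "rot (rot x) \<in> I" using R by (auto simp: I_def)
        moreover have "x = rot (rot (rot x))" using R x by (auto simp: I_def)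
        ultimately show "x \<in> rot ` I" by blast
      qed
    qed
  qed
  have bij2: "bij_betw (rot \<circ> rot) I I" by (rule bij_betw_trans[OF bij bij])
  have r1: "(\<Sum>a\<in>I. T (rot a)) = (\<Sum>a\<in>I. T a)" by (rule sum.reindex_bij_betw[OF bij])
  have r2: "(\<Sum>a\<in>I. T (rot (rot a))) = (\<Sum>a\<in>I. T a)"
    using sum.reindex_bij_betw[OF bij2, of T] by simp
  have "3 * (\<Sum>a\<in>I. T a) = (\<Sum>a\<in>I. T a + T (rot a) + T (rot (rot a)))"
    by (simp add: sum.distrib r1 r2)
  also have "\<dots> = (\<Sum>a\<in>I. k a * Xv rot lab F G a)"
  proof (rule sum.cong[OF refl])
    fix a assume "a \<in> I"
    hence a: "fvert src tgt a \<notin> bd" by (simp add: I_def)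
    show "T a + T (rot a) + T (rot (rot a)) = k a * Xv rot lab F G a"
      unfolding T_def k_def F_def G_def
      by (rule vertex[OF N a\<alpha> a\<beta> gauge_flags[OF gf sf w] gauge_flags[OF gg sg w] a])
  qed
  also have "\<dots> = (\<Sum>a\<in>UNIV. if a \<in> I then k a * Xv rot lab F G a else 0)"
    by (simp add: sum.If_cases)
  also have "\<dots> = (\<alpha> 2 3 + \<alpha> 1 3 - \<alpha> 1 2) * (\<Sum>a\<in>UNIV. if fvert src tgt a \<notin> bd \<and> wh (fvert src tgt a) then Xv rot lab F G a else 0)
   + (\<beta> 2 3 + \<beta> 1 3 - \<beta> 1 2) * (\<Sum>a\<in>UNIV. if fvert src tgt a \<notin> bd \<and> \<not> wh (fvert src tgt a) then Xv rot lab F G a else 0)"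
    unfolding sum_distrib_left sum.distrib[symmetric]
    by (rule sum.cong[OF refl]) (auto simp: I_def k_def)
  finally show ?thesis unfolding s1 s2 F_def G_def by simp
qed

theorem theorem3p2:
  fixes src tgt :: "'e::finite \<Rightarrow> 'v"
    and bd :: "'v set" and wh :: "'v \<Rightarrow> bool"
    and rot :: "'e flag \<Rightarrow> 'e flag" and lab :: "'e flag \<Rightarrow> nat"
  assumes N: "perfect_network src tgt bd wh rot lab"
  shows
    "(\<forall>\<alpha> \<beta> f g. smooth_on_EN f \<and> smooth_on_EN g \<longrightarrow>
        (\<forall>x\<in>XN. univ_bracket src tgt bd wh lab \<alpha> \<beta> (f \<circ> edge_weights) (g \<circ> edge_weights) x
                 = net_bracket src tgt bd wh lab \<alpha> \<beta> f g (edge_weights x)))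
   \<and>
    (\<forall>\<alpha> \<beta> f g. smooth_on_EN f \<and> smooth_on_EN g \<and>
        gauge_invariant src tgt bd f \<and> gauge_invariant src tgt bd g \<longrightarrow>
        gauge_invariant src tgt bd (net_bracket src tgt bd wh lab \<alpha> \<beta> f g))
   \<and>
    (\<exists>P Q :: (real ^ 'e \<Rightarrow> real) \<Rightarrow> (real ^ 'e \<Rightarrow> real) \<Rightarrow> real ^ 'e \<Rightarrow> real.
       \<forall>\<alpha> \<beta> f g. antisym3 \<alpha> \<and> antisym3 \<beta> \<and> smooth_on_EN f \<and> smooth_on_EN g \<and>
          gauge_invariant src tgt bd f \<and> gauge_invariant src tgt bd g \<longrightarrow>
          (\<forall>w\<in>EN. net_bracket src tgt bd wh lab \<alpha> \<beta> f g w =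
             (\<alpha> 2 3 + \<alpha> 1 3 - \<alpha> 1 2) * P f g w + (\<beta> 2 3 + \<beta> 1 3 - \<beta> 1 2) * Q f g w))"
proof (intro conjI)
  show "\<forall>\<alpha> \<beta> f g. smooth_on_EN f \<and> smooth_on_EN g \<longrightarrow>
        (\<forall>x\<in>XN. univ_bracket src tgt bd wh lab \<alpha> \<beta> (f \<circ> edge_weights) (g \<circ> edge_weights) x
                 = net_bracket src tgt bd wh lab \<alpha> \<beta> f g (edge_weights x))"
    using part0 by blast
  show "\<forall>\<alpha> \<beta> f g. smooth_on_EN f \<and> smooth_on_EN g \<and>
        gauge_invariant src tgt bd f \<and> gauge_invariant src tgt bd g \<longrightarrow>
        gauge_invariant src tgt bd (net_bracket src tgt bd wh lab \<alpha> \<beta> f g)"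
    using part1 by blast
  show "\<exists>P Q :: (real ^ 'e \<Rightarrow> real) \<Rightarrow> (real ^ 'e \<Rightarrow> real) \<Rightarrow> real ^ 'e \<Rightarrow> real.
       \<forall>\<alpha> \<beta> f g. antisym3 \<alpha> \<and> antisym3 \<beta> \<and> smooth_on_EN f \<and> smooth_on_EN g \<and>
          gauge_invariant src tgt bd f \<and> gauge_invariant src tgt bd g \<longrightarrow>
          (\<forall>w\<in>EN. net_bracket src tgt bd wh lab \<alpha> \<beta> f g w =
             (\<alpha> 2 3 + \<alpha> 1 3 - \<alpha> 1 2) * P f g w + (\<beta> 2 3 + \<beta> 1 3 - \<beta> 1 2) * Q f g w)"
    apply (rule exI[where x="\<lambda>f g w. (1/3) * (\<Sum>a\<in>UNIV. if fvert src tgt a \<notin> bd \<and> wh (fvert src tgt a) then Xv rot lab (Fof f w) (Fof g w) a else 0)"])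
    apply (rule exI[where x="\<lambda>f g w. (1/3) * (\<Sum>a\<in>UNIV. if fvert src tgt a \<notin> bd \<and> \<not> wh (fvert src tgt a) then Xv rot lab (Fof f w) (Fof g w) a else 0)"])
    using part2[OF N] by blast
qed

end
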